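(* For every integer $i > 0$, the limits defining $d_0(W,\sigma^iW)$ and $d(W,\sigma^iW)$ exist, and $$d_0(W,\sigma^i W) > \frac16 \qquad\text{and}\qquad d(W,\sigma^i W) > \frac29.$$
   Context: Words are finite strings over $\{0,1\}$; $\alpha(i)$ is the $i$-th letter and $|\alpha|$ the length. Define $W_0 = 0$, $W_{m+1} = W_m W_m 1 W_m$, and let $W=W(0)W(1)\cdots$ (indexed from $0$) be the unique infinite word having every $W_m$ as an initial segment. For words $\alpha,\beta$ of equal length, $d(\alpha,\beta) = |\{i:\alpha(i)\ne\beta(i)\}|/|\alpha|$, and (if $\alpha$ contains a $0$) $d_0(\alpha,\beta) = |\{i : \alpha(i)=0,\ \beta(i)=1\}|/|\{i:\alpha(i)=0\}|$. For $i>0$ and $n\ge0$ let $\alpha_n$ be the subword of $W$ of length $|W_n|$ starting at position $i$, and set $d(W,\sigma^iW) = \lim_{n\to\infty} d(W_n,\alpha_n)$ and $d_0(W,\sigma^iW) = \lim_{n\to\infty} d_0(W_n,\alpha_n)$. *)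

theory Defs
  imports Complex_Main
begin

text \<open>Words are lists over {0,1} (represented as natural numbers 0 and 1).\<close>

fun Wfin :: "nat \<Rightarrow> nat list" where
  "Wfin 0 = [0]"
| "Wfin (Suc m) = Wfin m @ Wfin m @ [1] @ Wfin m"

definition Winf :: "nat \<Rightarrow> nat" where
  "Winf = (THE w. \<forall>m. \<forall>k<length (Wfin m). w k = Wfin m ! k)"

definition dist_w :: "nat list \<Rightarrow> nat list \<Rightarrow> real" where
  "dist_w a b = real (card {k. k < length a \<and> a ! k \<noteq> b ! k}) / real (length a)"

definition dist0_w :: "nat list \<Rightarrow> nat list \<Rightarrow> real" where
  "dist0_w a b = real (card {k. k < length a \<and> a ! k = 0 \<and> b ! k = 1})
                 / real (card {k. k < length a \<and> a ! k = 0})"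

definition shifted_sub :: "nat \<Rightarrow> nat \<Rightarrow> nat list" where
  "shifted_sub i n = map Winf [i..<i + length (Wfin n)]"

end

theory Submission
  imports Defs
begin

definition L :: "nat \<Rightarrow> nat" where "L n = length (Wfin n)"

lemma L_Suc: "L (Suc n) = 3 * L n + 1" by (simp add: L_def)
lemma L_0: "L 0 = 1" by (simp add: L_def)
lemma L_pow: "2 * L n + 1 = 3 ^ Suc n"
  by (induction n) (auto simp: L_Suc L_0)
lemma L_gt: "n < L n"
  by (induction n) (auto simp: L_Suc L_0)
lemma L_ge1: "1 \<le> L n" using L_gt[of n] by simp
lemma L_mono: "m \<le> n \<Longrightarrow> L m \<le> L n"
  by (induction n) (auto simp: L_Suc le_Suc_eq)

lemma Wfin_prefix: "m \<le> n \<Longrightarrow> k < L m \<Longrightarrow> Wfin n ! k = Wfin m ! k"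
proof (induction n)
  case 0 then show ?case by simp
next
  case (Suc n)
  show ?case
  proof (cases "m = Suc n")
    case False
    then have "m \<le> n" using Suc by simp
    moreover have "k < length (Wfin n)" using L_mono[OF \<open>m \<le> n\<close>] Suc(3) by (simp add: L_def)
    ultimately show ?thesis using Suc by (simp add: nth_append)
  qed simp
qed

lemma Wfin_le1: "k < length (Wfin n) \<Longrightarrow> Wfin n ! k \<le> 1"
proof (induction n arbitrary: k)
  case 0 then show ?case by simp
next
  case (Suc n)
  show ?case
  proof (cases "k < 2 * length (Wfin n) + 1")
    case True with Suc show ?thesis by (auto simp: nth_append nth_Cons')
  next
    case False
    then obtain j where "k = 2 * length (Wfin n) + 1 + j" by (metis add.commute less_imp_add_positive not_less_eq nat_le_iff_add not_less)
    with Suc show ?thesis by (auto simp: nth_append)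
  qed
qed

lemma Winf_alt: "Winf = (\<lambda>k. Wfin k ! k)"
  unfolding Winf_def
proof (rule the_equality)
  show "\<forall>m. \<forall>k<length (Wfin m). Wfin k ! k = Wfin m ! k"
  proof (intro allI impI)
    fix m k assume "k < length (Wfin m)"
    then have km: "k < L m" by (simp add: L_def)
    have kk: "k < L k" using L_gt by simp
    have "Wfin (max k m) ! k = Wfin k ! k" by (rule Wfin_prefix[OF _ kk]) simp
    moreover have "Wfin (max k m) ! k = Wfin m ! k" by (rule Wfin_prefix[OF _ km]) simp
    ultimately show "Wfin k ! k = Wfin m ! k" by simp
  qed
next
  fix w assume "\<forall>m. \<forall>k<length (Wfin m). w k = Wfin m ! k"
  then show "w = (\<lambda>k. Wfin k ! k)" using L_gt by (auto simp: L_def)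
qed

lemma Winf_eq: "k < L n \<Longrightarrow> Winf k = Wfin n ! k"
proof -
  assume km: "k < L n"
  have kk: "k < L k" using L_gt by simp
  have "Wfin (max k n) ! k = Wfin k ! k" by (rule Wfin_prefix[OF _ kk]) simp
  moreover have "Wfin (max k n) ! k = Wfin n ! k" by (rule Wfin_prefix[OF _ km]) simp
  ultimately show ?thesis by (simp add: Winf_alt)
qed

lemma Winf_le1: "Winf k \<le> 1"
  using Winf_eq[of k k] L_gt[of k] Wfin_le1[of k k] by (simp add: L_def)

lemma P1: "j < L n \<Longrightarrow> Winf (L n + j) = Winf j"
proof -
  assume j: "j < L n"
  have "Winf (L n + j) = Wfin (Suc n) ! (L n + j)" by (rule Winf_eq) (use j in \<open>simp add: L_Suc\<close>)
  also have "\<dots> = Wfin n ! j" using j by (simp add: nth_append L_def)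
  also have "\<dots> = Winf j" using Winf_eq[OF j] by simp
  finally show ?thesis .
qed

lemma P2: "Winf (2 * L n) = 1"
proof -
  have "Winf (2 * L n) = Wfin (Suc n) ! (2 * L n)" by (rule Winf_eq) (simp add: L_Suc)
  also have "\<dots> = 1" by (simp add: nth_append L_def)
  finally show ?thesis .
qed

lemma P3: "j < L n \<Longrightarrow> Winf (2 * L n + 1 + j) = Winf j"
proof -
  assume j: "j < L n"
  have "Winf (2 * L n + 1 + j) = Wfin (Suc n) ! (2 * L n + 1 + j)" by (rule Winf_eq) (use j in \<open>simp add: L_Suc\<close>)
  also have "\<dots> = Wfin n ! j" using j by (simp add: nth_append L_def)
  also have "\<dots> = Winf j" using Winf_eq[OF j] by simp
  finally show ?thesis .
qed

lemma P3s: "j < L n \<Longrightarrow> Winf (Suc (2 * L n + j)) = Winf j"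
  using P3 by simp

lemma sum_split: "(\<Sum>k<m+n. f k) = (\<Sum>k<m. f k) + (\<Sum>k<n. f (m+k)) "
  for f :: "nat \<Rightarrow> 'a::comm_monoid_add"
  by (induction n) (simp_all add: add.assoc)

definition X :: "nat \<Rightarrow> nat \<Rightarrow> nat" where
  "X n b = (\<Sum>t<L n. if Winf t = 0 \<and> Winf (b+t) = 1 then 1 else 0)"

lemma X_cong: "(\<And>t. t < L n \<Longrightarrow> Winf (b+t) = Winf (c+t)) \<Longrightarrow> X n b = X n c"
  unfolding X_def by (rule sum.cong) auto

lemma D1: "j < 2 * L n \<Longrightarrow> Winf (2 * L n + 1 + j) = Winf j"
proof (cases "j < L n")
  case True then show ?thesis by (rule P3)
next
  case False
  assume j: "j < 2 * L n"
  define v where "v = j - L n"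
  have v: "j = L n + v" "v < L n" using False j by (simp_all add: v_def)
  have "Winf (2 * L n + 1 + j) = Winf (L (Suc n) + v)" by (simp add: v L_Suc)
  also have "\<dots> = Winf v" by (rule P1) (use v in \<open>simp add: L_Suc\<close>)
  also have "\<dots> = Winf j" using P1[OF v(2)] v by simp
  finally show ?thesis .
qed

lemma R1: "b = 2 * L n + 1 + i \<Longrightarrow> i \<le> L n \<Longrightarrow> X n b = X n i"
proof (rule X_cong)
  fix t assume "b = 2 * L n + 1 + i" "i \<le> L n" "t < L n"
  then show "Winf (b + t) = Winf (i + t)" using D1[of "i+t" n] by (simp add: add.assoc)
qed

lemma R3: "b = 3 * L n + 1 + i \<Longrightarrow> i \<le> 2 * L n + 1 \<Longrightarrow> X n b = X n i"
  apply (rule X_cong)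
  using P1[of "i + _" "Suc n"] by (simp add: L_Suc add.assoc)

lemma R4: "b = 5 * L n + 2 + j \<Longrightarrow> j \<le> L n + 1 \<Longrightarrow> X n b = X n (L n + j)"
proof (rule X_cong)
  fix t assume b: "b = 5 * L n + 2 + j" and j: "j \<le> L n + 1" and t: "t < L n"
  define u where "u = j + t"
  have u: "u \<le> 2 * L n" using j t u_def by simp
  show "Winf (b + t) = Winf (L n + j + t)"
  proof -
    consider "u < L n" | "u = L n" | v where "u = L n + 1 + v" "v < L n"
    proof -
      assume a: "u < L n \<Longrightarrow> thesis" "u = L n \<Longrightarrow> thesis" "\<And>v. u = L n + 1 + v \<Longrightarrow> v < L n \<Longrightarrow> thesis"
      show thesis
      proof (cases "u \<le> L n")
        case True then show ?thesis using a(1,2) by linarith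
      next
        case False then show ?thesis using a(3)[of "u - L n - 1"] u by simp
      qed
    qed
    then show ?thesis
    proof cases
      case 1
      have "b + t = L (Suc n) + (2 * L n + 1 + u)" using b u_def L_Suc[of n] by arith
      then have "Winf (b + t) = Winf (L (Suc n) + (2 * L n + 1 + u))" by (simp only:)
      also have "\<dots> = Winf (2 * L n + 1 + u)" by (rule P1) (use 1 in \<open>simp add: L_Suc\<close>)
      also have "\<dots> = Winf u" using 1 by (rule P3)
      also have "\<dots> = Winf (L n + u)" using 1 by (simp add: P1)
      finally show ?thesis by (simp add: u_def add.assoc)
    next
      case 2
      have "b + t = 2 * L (Suc n)" using b u_def 2 L_Suc[of n] by arith
      then have "Winf (b + t) = Winf (2 * L (Suc n))" by (simp only:)
      also have "\<dots> = 1" by (rule P2)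
      also have "\<dots> = Winf (2 * L n)" by (simp add: P2)
      moreover have "L n + j + t = 2 * L n" using u_def 2 by arith
      ultimately show ?thesis by (simp only:)
    next
      case 3
      have "b + t = 2 * L (Suc n) + 1 + v" using b u_def 3 L_Suc[of n] by arith
      then have "Winf (b + t) = Winf (2 * L (Suc n) + 1 + v)" by (simp only:)
      also have "\<dots> = Winf v" by (rule P3) (use 3 in \<open>simp add: L_Suc\<close>)
      also have "\<dots> = Winf (2 * L n + 1 + v)" using 3 P3[of v n] by simp
      moreover have "L n + j + t = 2 * L n + 1 + v" using u_def 3 by arith
      ultimately show ?thesis by (simp only:)
    qed
  qed
qed

lemma R5: "b = 6 * L n + 2 + r \<Longrightarrow> 1 \<le> r \<Longrightarrow> r \<le> 2 * L n + 2 \<Longrightarrow> X n b = X n (r - 1)"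
proof (rule X_cong)
  fix t assume b: "b = 6 * L n + 2 + r" and r: "1 \<le> r" "r \<le> 2 * L n + 2" and t: "t < L n"
  have "b + t = 2 * L (Suc n) + 1 + (r - 1 + t)" using r b L_Suc[of n] by arith
  then have "Winf (b + t) = Winf (2 * L (Suc n) + 1 + (r - 1 + t))" by (simp only:)
  also have "\<dots> = Winf (r - 1 + t)" by (rule P3) (use r t in \<open>simp add: L_Suc\<close>)
  finally show "Winf (b + t) = Winf (r - 1 + t)" .
qed

lemma R6: "b = 6 * L n + 2 \<Longrightarrow> X n b = X n (2 * L n)"
proof (rule X_cong)
  fix t assume b: "b = 6 * L n + 2" and t: "t < L n"
  show "Winf (b + t) = Winf (2 * L n + t)"
  proof (cases t)
    case 0 then show ?thesis using P2[of n] P2[of "Suc n"] by (simp add: b L_Suc)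
  next
    case (Suc v)
    have "Winf (b + t) = Winf (2 * L (Suc n) + 1 + v)" by (simp add: b Suc L_Suc)
    also have "\<dots> = Winf v" by (rule P3) (use t Suc in \<open>simp add: L_Suc\<close>)
    also have "\<dots> = Winf (2 * L n + 1 + v)" using t Suc P3[of v n] by simp
    finally show ?thesis by (simp add: Suc)
  qed
qed

lemma Z0: "X n 0 = 0"
  unfolding X_def by (rule sum.neutral) auto
lemma Z1: "X n (L n) = 0"
  unfolding X_def by (rule sum.neutral) (auto simp: P1)
lemma Z2: "X n (2 * L n + 1) = 0" using R1[of "2 * L n + 1" n 0] by (simp add: Z0)

lemma X_rec: "X (Suc n) b = X n b + X n (L n + b) + X n (2 * L n + 1 + b)"
proof -
  define g where "g = (\<lambda>t. if Winf t = 0 \<and> Winf (b+t) = 1 then 1 else (0::nat))"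
  have e: "L (Suc n) = (2 * L n + 1) + L n" by (simp add: L_Suc)
  have e2: "2 * L n + 1 = L n + L n + 1" by simp
  have "X (Suc n) b = sum g {..<(2 * L n + 1) + L n}" by (simp only: X_def e g_def)
  also have "\<dots> = sum g {..<L n + L n + 1} + (\<Sum>t<L n. g (2 * L n + 1 + t))"
    by (simp only: sum_split e2)
  also have "sum g {..<L n + L n + 1} = sum g {..<L n + L n} + g (L n + L n)"
    by simp
  also have "sum g {..<L n + L n} = sum g {..<L n} + (\<Sum>t<L n. g (L n + t))"
    by (rule sum_split)
  also have "(\<Sum>t<L n. g (L n + t)) = X n (L n + b)"
    unfolding X_def
  proof (rule sum.cong[OF refl])
    fix t assume "t \<in> {..<L n}"
    then have "Winf (L n + t) = Winf t" by (simp add: P1)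
    moreover have "b + (L n + t) = L n + b + t" by simp
    ultimately show "g (L n + t) = (if Winf t = 0 \<and> Winf (L n + b + t) = 1 then 1 else 0)"
      by (simp only: g_def)
  qed
  also have "(\<Sum>t<L n. g (2 * L n + 1 + t)) = X n (2 * L n + 1 + b)"
    unfolding X_def
  proof (rule sum.cong[OF refl])
    fix t assume "t \<in> {..<L n}"
    then have "Winf (2 * L n + 1 + t) = Winf t" by (simp add: P3s)
    moreover have "b + (2 * L n + 1 + t) = 2 * L n + 1 + b + t" by simp
    ultimately show "g (2 * L n + 1 + t) = (if Winf t = 0 \<and> Winf (2 * L n + 1 + b + t) = 1 then 1 else 0)"
      by (simp only: g_def)
  qed
  also have "g (L n + L n) = 0" using P2[of n] by (simp add: g_def mult_2)
  also have "sum g {..<L n} = X n b" by (simp add: X_def g_def)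
  finally show ?thesis by simp
qed


lemma R0: "b = c \<Longrightarrow> X n b = X n c" by simp

lemma R4g: "L n \<le> c \<Longrightarrow> b = 4 * L n + 2 + c \<Longrightarrow> c \<le> 2 * L n + 1 \<Longrightarrow> X n b = X n c"
  using R4[of b n "c - L n"] by simp

lemma R5g: "b = 6 * L n + 3 + c \<Longrightarrow> c \<le> 2 * L n + 1 \<Longrightarrow> X n b = X n c"
  using R5[of b n "c + 1"] by simp

lemma rec3: "X n b = X n a1 \<Longrightarrow> X n (L n + b) = X n a2 \<Longrightarrow> X n (2 * L n + 1 + b) = X n a3
  \<Longrightarrow> X (Suc n) b = X n a1 + X n a2 + X n a3"
  by (simp add: X_rec)

definition bnd :: "nat \<Rightarrow> nat \<Rightarrow> bool" where
  "bnd n i \<longleftrightarrow> (1 \<le> i \<and> i < L n) \<or> (L n < i \<and> i \<le> 2 * L n)"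

definition invW :: "nat \<Rightarrow> bool" where
  "invW n \<longleftrightarrow> 2 * X n 1 + 1 = 3^n \<and> 2 * X n (L n + 1) = 3^n + 1 \<and> 2 * X n (2 * L n) = 3^n + 1
     \<and> 2 * X n (L n - 1) + 1 = 3^n \<and> (\<forall>i. bnd n i \<longrightarrow> 3^n + 3 \<le> 6 * X n i)"

lemma X_zero_lvl: "X 0 b = (if Winf b = 1 then 1 else 0)"
proof -
  have "Winf 0 = Wfin 0 ! 0" by (rule Winf_eq) (simp add: L_0)
  then show ?thesis by (simp add: X_def L_0)
qed

lemma W_small: "Winf 0 = 0" "Winf 1 = 0" "Winf 2 = 1"
proof -
  have "k < 4 \<Longrightarrow> Winf k = Wfin 1 ! k" for k by (rule Winf_eq) (simp add: L_def)
  then show "Winf 0 = 0" "Winf 1 = 0" "Winf 2 = 1" by auto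
qed

lemma invW0: "invW 0"
proof -
  have b: "bnd 0 i \<Longrightarrow> i = 2" for i by (auto simp: bnd_def L_0)
  have x: "X 0 0 = 0" "X 0 1 = 0" "X 0 2 = 1" using W_small by (simp_all add: X_zero_lvl numeral_eq_Suc)
  have bb: "bnd 0 i \<Longrightarrow> 4 \<le> 6 * X 0 i" for i using b[of i] x by simp
  show ?thesis unfolding invW_def using bb x by (simp add: L_0 numeral_eq_Suc)
qed

lemma inv_step:
  assumes "invW n" shows "invW (Suc n)"
proof -
  have l1: "1 \<le> L n" by (rule L_ge1)
  have LS: "L (Suc n) = 3 * L n + 1" by (rule L_Suc)
  from assms have e1: "2*X n 1 + 1 = 3^n" and e2: "2*X n (L n + 1) = 3^n+1"
    and e3: "2*X n (2*L n) = 3^n+1" and e4: "2*X n (L n - 1)+1 = 3^n"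
    and bd: "\<And>i. bnd n i \<Longrightarrow> 3^n+3 \<le> 6*X n i" by (auto simp: invW_def)
  have bd1: "\<And>i. 1 \<le> i \<Longrightarrow> i < L n \<Longrightarrow> 3^n+3 \<le> 6*X n i"
    and bd2: "\<And>i. L n < i \<Longrightarrow> i \<le> 2*L n \<Longrightarrow> 3^n+3 \<le> 6*X n i" using bd by (auto simp: bnd_def)
  note z = Z0[of n] Z1[of n] Z2[of n]
  have p3: "(3::nat)^Suc n = 3 * 3^n" by simp
  have pos: "(1::nat) \<le> 3^n" by simp
  have x1: "2 * X (Suc n) 1 + 1 = 3^Suc n"
  proof -
    have "X (Suc n) (1) = X n (1) + X n (L n + 1) + X n (1)"
      by (rule rec3, (rule R0; use l1 in arith), (rule R0; use l1 in arith), (rule R1; use l1 in arith))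
    then show ?thesis using e1 e2 p3 by arith
  qed
  have x2: "2 * X (Suc n) (L (Suc n) + 1) = 3^Suc n + 1"
  proof -
    have "X (Suc n) (3 * L n + 1 + 1) = X n (1) + X n (L n + 1) + X n (L n + 1)"
      by (rule rec3, (rule R3; use l1 in arith), (rule R3; use l1 in arith), (rule R4g; use l1 in arith))
    then show ?thesis using e1 e2 p3 LS by (simp; arith)
  qed
  have x3: "2 * X (Suc n) (2 * L (Suc n)) = 3^Suc n + 1"
  proof -
    have "X (Suc n) (6 * L n + 2) = X n (2 * L n) + X n (L n - 1) + X n (2 * L n)"
      by (rule rec3, (rule R6; use l1 in arith), (rule R5g; use l1 in arith), (rule R5g; use l1 in arith))
    then show ?thesis using e3 e4 p3 LS by (simp; arith)
  qed
  have x4: "2 * X (Suc n) (L (Suc n) - 1) + 1 = 3^Suc n"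
  proof -
    have "X (Suc n) (3 * L n) = X n (L n - 1) + X n (L n - 1) + X n (2 * L n)"
      by (rule rec3, (rule R1; use l1 in arith), (rule R3; use l1 in arith), (rule R3; use l1 in arith))
    then show ?thesis using e3 e4 p3 LS by (simp; arith)
  qed
  have bd': "3^Suc n + 3 \<le> 6 * X (Suc n) b" if hb: "bnd (Suc n) b" for b
  proof -
    from hb have hb': "(1 \<le> b \<and> b < 3*L n+1) \<or> (3*L n+1 < b \<and> b \<le> 6*L n+2)" by (simp add: bnd_def L_Suc)
    show ?thesis
    proof (cases "b < L n")
      case True
      have A: "1 \<le> b" "b < L n" using True  hb' l1 by arith+
      have r: "X (Suc n) b = X n (b) + X n (L n + b) + X n (b)"
        by (rule rec3, (rule R0; use A l1 in arith), (rule R0; use A l1 in arith), (rule R1; use A l1 in arith))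
      have b0: "3^n+3 \<le> 6 * X n (b)" by (rule bd1) (use A l1 in arith)+
      have b1: "3^n+3 \<le> 6 * X n (L n + b)" by (rule bd2) (use A l1 in arith)+
      show ?thesis using r b0 b1 e1 z p3 pos A by (simp add: mult_2; arith)
    next
      case False
      note ng0 = False
      show ?thesis
    proof (cases "b \<le> L n")
      case True
      have B: "b = L n" using True ng0 hb' l1 by arith+
      have r: "X (Suc n) b = X n (L n) + X n (2 * L n) + X n (L n)"
        by (rule rec3, (rule R0; use B l1 in arith), (rule R0; use B l1 in arith), (rule R1; use B l1 in arith))
      show ?thesis using r  e3 z p3 pos B by (simp add: mult_2; arith)
    next
      case False
      note ng1 = False
      show ?thesis
    proof (cases "b \<le> L n + 1")
      case True
      have C: "b = L n + 1" using True ng1 hb' l1 by arith+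
      have r: "X (Suc n) b = X n (L n + 1) + X n (2 * L n + 1) + X n (1)"
        by (rule rec3, (rule R0; use C l1 in arith), (rule R0; use C l1 in arith), (rule R3; use C l1 in arith))
      show ?thesis using r  e1 e2 z p3 pos C by (simp add: mult_2; arith)
    next
      case False
      note ng2 = False
      show ?thesis
    proof (cases "b < 2 * L n")
      case True
      have D: "L n + 2 \<le> b" "b < 2 * L n" using True ng2 hb' l1 by arith+
      have r: "X (Suc n) b = X n (b) + X n (b - L n - 1) + X n (b - L n)"
        by (rule rec3, (rule R0; use D l1 in arith), (rule R1; use D l1 in arith), (rule R3; use D l1 in arith))
      have b0: "3^n+3 \<le> 6 * X n (b)" by (rule bd2) (use D l1 in arith)+
      have b1: "3^n+3 \<le> 6 * X n (b - L n - 1)" by (rule bd1) (use D l1 in arith)+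
      have b2: "3^n+3 \<le> 6 * X n (b - L n)" by (rule bd1) (use D l1 in arith)+
      show ?thesis using r b0 b1 b2 e1 z p3 pos D by (simp add: mult_2; arith)
    next
      case False
      note ng3 = False
      show ?thesis
    proof (cases "b \<le> 2 * L n")
      case True
      have E: "b = 2 * L n" "2 \<le> L n" using True ng2 ng3 hb' l1 by arith+
      have r: "X (Suc n) b = X n (2 * L n) + X n (L n - 1) + X n (L n)"
        by (rule rec3, (rule R0; use E l1 in arith), (rule R1; use E l1 in arith), (rule R3; use E l1 in arith))
      show ?thesis using r  e3 e4 z p3 pos E by (simp add: mult_2; arith)
    next
      case False
      note ng4 = False
      show ?thesis
    proof (cases "b \<le> 2 * L n + 1")
      case True
      have F: "b = 2 * L n + 1" using True ng4 hb' l1 by arith+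
      have r: "X (Suc n) b = X n (2 * L n + 1) + X n (0) + X n (L n + 1)"
        by (rule rec3, (rule R0; use F l1 in arith), (rule R3; use F l1 in arith), (rule R3; use F l1 in arith))
      show ?thesis using r  e2 z p3 pos F by (simp add: mult_2; arith)
    next
      case False
      note ng5 = False
      show ?thesis
    proof (cases "b \<le> 3 * L n")
      case True
      have G: "2 * L n + 2 \<le> b" "b \<le> 3 * L n" using True ng5 hb' l1 by arith+
      have r: "X (Suc n) b = X n (b - 2 * L n - 1) + X n (b - 2 * L n - 1) + X n (b - L n)"
        by (rule rec3, (rule R1; use G l1 in arith), (rule R3; use G l1 in arith), (rule R3; use G l1 in arith))
      have b0: "3^n+3 \<le> 6 * X n (b - 2 * L n - 1)" by (rule bd1) (use G l1 in arith)+
      have b1: "3^n+3 \<le> 6 * X n (b - L n)" by (rule bd2) (use G l1 in arith)+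
      show ?thesis using r b0 b1 e1 z p3 pos G by (simp add: mult_2; arith)
    next
      case False
      note ng6 = False
      show ?thesis
    proof (cases "b \<le> 4 * L n")
      case True
      have H: "3 * L n + 2 \<le> b" "b < 4 * L n + 1" using True ng6 hb' l1 by arith+
      have r: "X (Suc n) b = X n (b - 3 * L n - 1) + X n (b - 2 * L n - 1) + X n (b - 2 * L n - 1)"
        by (rule rec3, (rule R3; use H l1 in arith), (rule R3; use H l1 in arith), (rule R4g; use H l1 in arith))
      have b0: "3^n+3 \<le> 6 * X n (b - 3 * L n - 1)" by (rule bd1) (use H l1 in arith)+
      have b1: "3^n+3 \<le> 6 * X n (b - 2 * L n - 1)" by (rule bd2) (use H l1 in arith)+
      show ?thesis using r b0 b1 e1 z p3 pos H by (simp add: mult_2; arith)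
    next
      case False
      note ng7 = False
      show ?thesis
    proof (cases "b \<le> 4 * L n + 1")
      case True
      have I: "b = 4 * L n + 1" using True ng7 hb' l1 by arith+
      have r: "X (Suc n) b = X n (L n) + X n (2 * L n) + X n (2 * L n)"
        by (rule rec3, (rule R3; use I l1 in arith), (rule R3; use I l1 in arith), (rule R4g; use I l1 in arith))
      show ?thesis using r  e3 z p3 pos I by (simp add: mult_2; arith)
    next
      case False
      note ng8 = False
      show ?thesis
    proof (cases "b \<le> 4 * L n + 2")
      case True
      have J: "b = 4 * L n + 2" using True ng8 hb' l1 by arith+
      have r: "X (Suc n) b = X n (L n + 1) + X n (2 * L n + 1) + X n (0)"
        by (rule rec3, (rule R3; use J l1 in arith), (rule R3; use J l1 in arith), (rule R5g; use J l1 in arith))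
      show ?thesis using r  e2 z p3 pos J by (simp add: mult_2; arith)
    next
      case False
      note ng9 = False
      show ?thesis
    proof (cases "b \<le> 5 * L n + 1")
      case True
      have K: "4 * L n + 3 \<le> b" "b \<le> 5 * L n + 1" using True ng9 hb' l1 by arith+
      have r: "X (Suc n) b = X n (b - 3 * L n - 1) + X n (b - 3 * L n - 2) + X n (b - 4 * L n - 2)"
        by (rule rec3, (rule R3; use K l1 in arith), (rule R4g; use K l1 in arith), (rule R5g; use K l1 in arith))
      have b0: "3^n+3 \<le> 6 * X n (b - 3 * L n - 1)" by (rule bd2) (use K l1 in arith)+
      have b1: "3^n+3 \<le> 6 * X n (b - 3 * L n - 2)" by (rule bd2) (use K l1 in arith)+
      have b2: "3^n+3 \<le> 6 * X n (b - 4 * L n - 2)" by (rule bd1) (use K l1 in arith)+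
      show ?thesis using r b0 b1 b2 e1 z p3 pos K by (simp add: mult_2; arith)
    next
      case False
      note ng10 = False
      show ?thesis
    proof (cases "b \<le> 5 * L n + 2")
      case True
      have M: "b = 5 * L n + 2" using True ng10 hb' l1 by arith+
      have r: "X (Suc n) b = X n (2 * L n + 1) + X n (2 * L n) + X n (L n)"
        by (rule rec3, (rule R3; use M l1 in arith), (rule R6; use M l1 in arith), (rule R5g; use M l1 in arith))
      show ?thesis using r  e3 z p3 pos M by (simp add: mult_2; arith)
    next
      case False
      note ng11 = False
      show ?thesis
    proof (cases "b \<le> 5 * L n + 3")
      case True
      have N: "b = 5 * L n + 3" using True ng11 hb' l1 by arith+
      have r: "X (Suc n) b = X n (L n + 1) + X n (0) + X n (L n + 1)"
        by (rule rec3, (rule R4g; use N l1 in arith), (rule R5g; use N l1 in arith), (rule R5g; use N l1 in arith))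
      show ?thesis using r  e2 z p3 pos N by (simp add: mult_2; arith)
    next
      case False
      note ng12 = False
      have O: "5 * L n + 4 \<le> b" "b \<le> 6 * L n + 2" using ng12 hb' l1 by arith+
      have r: "X (Suc n) b = X n (b - 4 * L n - 2) + X n (b - 5 * L n - 3) + X n (b - 4 * L n - 2)"
        by (rule rec3, (rule R4g; use O l1 in arith), (rule R5g; use O l1 in arith), (rule R5g; use O l1 in arith))
      have b0: "3^n+3 \<le> 6 * X n (b - 4 * L n - 2)" by (rule bd2) (use O l1 in arith)+
      have b1: "3^n+3 \<le> 6 * X n (b - 5 * L n - 3)" by (rule bd1) (use O l1 in arith)+
      show ?thesis using r b0 b1 e1 z p3 pos O by (simp add: mult_2; arith)
    qed
    qed
    qed
    qed
    qed
    qed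
    qed
    qed
    qed
    qed
    qed
    qed
    qed
  qed
  show ?thesis unfolding invW_def using x1 x2 x3 x4 bd' by blast
qed


lemma inv_all: "invW n"
  by (induction n) (auto intro: invW0 inv_step)

lemma cs: "card {k. k < (m::nat) \<and> P k} = (\<Sum>k<m. if P k then 1 else 0 :: nat)"
proof (induction m)
  case 0 then show ?case by simp
next
  case (Suc m)
  have e: "{k. k < Suc m \<and> P k} = (if P m then insert m {k. k < m \<and> P k} else {k. k < m \<and> P k})"
    by (auto simp: less_Suc_eq)
  show ?case using Suc by (simp add: e)
qed

definition Zc :: "nat \<Rightarrow> nat" where "Zc n = (\<Sum>t<L n. if Winf t = 0 then 1 else 0)"

lemma Zc_rec: "Zc (Suc n) = 3 * Zc n"
proof -
  define g where "g = (\<lambda>t. if Winf t = 0 then 1 else (0::nat))"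
  have e: "L (Suc n) = (2 * L n + 1) + L n" by (simp add: L_Suc)
  have e2: "2 * L n + 1 = L n + L n + 1" by simp
  have "Zc (Suc n) = sum g {..<(2 * L n + 1) + L n}" by (simp only: Zc_def e g_def)
  also have "\<dots> = sum g {..<L n + L n + 1} + (\<Sum>t<L n. g (2 * L n + 1 + t))"
    by (simp only: sum_split e2)
  also have "sum g {..<L n + L n + 1} = sum g {..<L n + L n} + g (L n + L n)"
    by simp
  also have "sum g {..<L n + L n} = sum g {..<L n} + (\<Sum>t<L n. g (L n + t))"
    by (rule sum_split)
  also have "(\<Sum>t<L n. g (L n + t)) = Zc n"
    unfolding Zc_def g_def by (rule sum.cong) (auto simp: P1)
  also have "(\<Sum>t<L n. g (2 * L n + 1 + t)) = Zc n"
    unfolding Zc_def g_def by (rule sum.cong) (auto simp: P3s)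
  also have "g (L n + L n) = 0" using P2[of n] by (simp add: g_def mult_2)
  also have "sum g {..<L n} = Zc n" by (simp add: Zc_def g_def)
  finally show ?thesis by simp
qed

lemma Zc_pow: "Zc n = 3 ^ n"
proof (induction n)
  case 0
  have "Winf 0 = Wfin 0 ! 0" by (rule Winf_eq) (simp add: L_0)
  then show ?case by (simp add: Zc_def L_0)
next
  case (Suc n) then show ?case by (simp add: Zc_rec)
qed

lemma step_x: "i \<le> L m \<Longrightarrow> X (Suc m) i = 2 * X m i + X m (L m + i)"
  using X_rec[of m i] R1[of "2 * L m + 1 + i" m i] by simp

lemma step_y: "i \<le> L m \<Longrightarrow> X (Suc m) (L (Suc m) + i) = X m i + 2 * X m (L m + i)"
proof -
  assume h: "i \<le> L m"
  have "X (Suc m) (L (Suc m) + i) = X m i + X m (L m + i) + X m (L m + i)"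
    unfolding L_Suc
    by (rule rec3, (rule R3; use h in arith), (rule R3; use h in arith), (rule R4g; use h in arith))
  then show ?thesis by simp
qed

lemma shifted_nth: "k < L n \<Longrightarrow> shifted_sub i n ! k = Winf (i + k)"
  by (simp add: shifted_sub_def L_def)

lemma len_shifted: "length (shifted_sub i n) = L n"
  by (simp add: shifted_sub_def L_def)

lemma dist0_eq: "dist0_w (Wfin n) (shifted_sub i n) = real (X n i) / 3 ^ n"
proof -
  have "{k. k < length (Wfin n) \<and> Wfin n ! k = 0 \<and> shifted_sub i n ! k = 1}
        = {k. k < L n \<and> (Winf k = 0 \<and> Winf (i + k) = 1)}"
    by (auto simp: L_def[symmetric] shifted_nth Winf_eq)
  moreover have "{k. k < length (Wfin n) \<and> Wfin n ! k = 0} = {k. k < L n \<and> Winf k = 0}"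
    by (auto simp: L_def[symmetric] Winf_eq)
  ultimately show ?thesis
    by (simp add: dist0_w_def cs X_def Zc_def[symmetric] Zc_pow)
qed

lemma shift_sum: "(\<And>k. k < i \<Longrightarrow> f (m + k) = f k) \<Longrightarrow> (\<Sum>k<m. f (i + k)) = (\<Sum>k<m. f k)"
  for f :: "nat \<Rightarrow> nat"
proof -
  assume h: "\<And>k. k < i \<Longrightarrow> f (m + k) = f k"
  have a: "(\<Sum>k<i + m. f k) = (\<Sum>k<i. f k) + (\<Sum>k<m. f (i + k))" by (rule sum_split)
  have b: "(\<Sum>k<m + i. f k) = (\<Sum>k<m. f k) + (\<Sum>k<i. f (m + k))" by (rule sum_split)
  have c: "(\<Sum>k<i. f (m + k)) = (\<Sum>k<i. f k)" using h by (rule sum.cong[OF refl]) simp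
  show ?thesis using a b c by (simp add: add.commute)
qed

lemma dist_eq: "i \<le> L n \<Longrightarrow> dist_w (Wfin n) (shifted_sub i n) = 2 * real (X n i) / real (L n)"
proof -
  assume h: "i \<le> L n"
  have s: "{k. k < length (Wfin n) \<and> Wfin n ! k \<noteq> shifted_sub i n ! k}
        = {k. k < L n \<and> Winf k \<noteq> Winf (i + k)}"
    by (auto simp: L_def[symmetric] shifted_nth Winf_eq)
  define o1 where "o1 = (\<lambda>k. if Winf k = 1 then 1 else (0::nat))"
  have ones: "(\<Sum>k<L n. o1 (i + k)) = (\<Sum>k<L n. o1 k)"
    by (rule shift_sum) (use h in \<open>simp add: o1_def P1\<close>)
  let ?A = "\<lambda>k. if Winf k = 0 \<and> Winf (i + k) = 1 then 1 else (0::nat)"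
  let ?B = "\<lambda>k. if Winf k = 1 \<and> Winf (i + k) = 0 then 1 else (0::nat)"
  have pt1: "(if Winf k \<noteq> Winf (i + k) then 1 else 0) = ?A k + ?B k" for k
    using Winf_le1[of k] Winf_le1[of "i+k"] by auto
  have pt2: "o1 k + ?A k = o1 (i + k) + ?B k" for k
    using Winf_le1[of k] Winf_le1[of "i+k"] by (auto simp: o1_def)
  have "(\<Sum>k<L n. o1 k) + (\<Sum>k<L n. ?A k) = (\<Sum>k<L n. o1 (i + k)) + (\<Sum>k<L n. ?B k)"
    using pt2 by (simp add: sum.distrib[symmetric])
  then have AB: "(\<Sum>k<L n. ?B k) = (\<Sum>k<L n. ?A k)" using ones by simp
  have "card {k. k < L n \<and> Winf k \<noteq> Winf (i + k)} = (\<Sum>k<L n. ?A k) + (\<Sum>k<L n. ?B k)"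
    by (simp only: cs pt1 sum.distrib)
  also have "\<dots> = 2 * X n i" using AB by (simp add: X_def)
  finally have "card {k. k < L n \<and> Winf k \<noteq> Winf (i + k)} = 2 * X n i" .
  then show ?thesis unfolding dist_w_def s by (simp add: L_def)
qed


lemma real_L: "real (L m) = (3 ^ Suc m - 1) / 2"
proof -
  have "real (2 * L m + 1) = real (3 ^ Suc m)" by (simp only: L_pow)
  then show ?thesis by simp
qed

theorem proposition1:
  fixes i :: nat
  assumes "i > 0"
  shows "\<exists>L0 L. (\<lambda>n. dist0_w (Wfin n) (shifted_sub i n)) \<longlonglongrightarrow> L0
              \<and> (\<lambda>n. dist_w (Wfin n) (shifted_sub i n)) \<longlonglongrightarrow> L
              \<and> L0 > 1/6 \<and> L > 2/9"
proof -
  define N where "N = i"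
  have iN: "i < L N" using L_gt N_def by simp
  have i1: "1 \<le> i" using assms by simp
  have invN: "invW N" by (rule inv_all)
  have bx: "3^N + 3 \<le> 6 * X N i" using invN iN i1 by (auto simp: invW_def bnd_def)
  have by': "3^N + 3 \<le> 6 * X N (L N + i)" using invN iN i1 by (auto simp: invW_def bnd_def)
  define S where "S = real (X N i) + real (X N (L N + i))"
  define D where "D = real (X N i) - real (X N (L N + i))"
  have S3: "3 * S > 3 ^ N"
  proof -
    have "real (3^N + 3) \<le> real (6 * X N i)" using bx by linarith
    moreover have "real (3^N + 3) \<le> real (6 * X N (L N + i))" using by' by linarith
    ultimately show ?thesis unfolding S_def by simp
  qed
  have cf: "real (X (N+k) i) = (3^k * S + D)/2 \<and> real (X (N+k) (L (N+k) + i)) = (3^k*S - D)/2" for k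
  proof (induction k)
    case 0 show ?case by (simp add: S_def D_def)
  next
    case (Suc k)
    have h: "i \<le> L (N+k)" using L_mono[of N "N+k"] iN by simp
    have a: "real (X (Suc (N+k)) i) = 2 * real (X (N+k) i) + real (X (N+k) (L (N+k) + i))"
      using step_x[OF h] by simp
    have b: "real (X (Suc (N+k)) (L (Suc (N+k)) + i)) = real (X (N+k) i) + 2 * real (X (N+k) (L (N+k) + i))"
      using step_y[OF h] by simp
    show ?case using Suc a b by (simp add: field_simps)
  qed
  define L0 where "L0 = S / (2 * 3^N)"
  define LL where "LL = 2 * S / 3^(N+1)"
  have lim0: "(\<lambda>n. dist0_w (Wfin n) (shifted_sub i n)) \<longlonglongrightarrow> L0"
  proof (rule LIMSEQ_offset[where k=N])
    have eq: "dist0_w (Wfin (k+N)) (shifted_sub i (k+N)) = L0 + (D/(2*3^N)) * (1/3)^k" for k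
    proof -
      have x: "real (X (k+N) i) = (3^k * S + D)/2" using cf[of k] by (simp add: add.commute)
      have "dist0_w (Wfin (k+N)) (shifted_sub i (k+N)) = ((3^k * S + D)/2) / 3^(k+N)"
        by (simp only: dist0_eq x)
      also have "\<dots> = L0 + (D/(2*3^N)) * (1/3)^k"
        by (simp add: L0_def power_add field_simps power_one_over)
      finally show ?thesis .
    qed
    have "(\<lambda>k. L0 + (D/(2*3^N)) * (1/3)^k) \<longlonglongrightarrow> L0 + (D/(2*3^N)) * 0"
      by (intro tendsto_intros LIMSEQ_realpow_zero) auto
    then show "(\<lambda>k. dist0_w (Wfin (k+N)) (shifted_sub i (k+N))) \<longlonglongrightarrow> L0" using eq by simp
  qed
  have lim1: "(\<lambda>n. dist_w (Wfin n) (shifted_sub i n)) \<longlonglongrightarrow> LL"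
  proof (rule LIMSEQ_offset[where k=N])
    have eq: "dist_w (Wfin (k+N)) (shifted_sub i (k+N)) = (2*S + 2*D*(1/3)^k) / (3^(N+1) - (1/3)^k)" for k
    proof -
      have h: "i \<le> L (k+N)" using L_mono[of N "k+N"] iN by simp
      have q: "(3::real)^k \<ge> 1" by simp
      have c: "(3::real)^(N+1) \<ge> 3"
      proof -
        have "(1::real) \<le> 3^N" by simp
        then show ?thesis by simp
      qed
      have x: "real (X (k+N) i) = (3^k * S + D)/2" using cf[of k] by (simp add: add.commute)
      have "dist_w (Wfin (k+N)) (shifted_sub i (k+N)) = 2 * ((3^k * S + D)/2) / ((3 ^ Suc (k+N) - 1)/2)"
        by (simp only: dist_eq[OF h] x real_L)
      also have "\<dots> = (2*S*3^k + 2*D) / (3^(N+1) * 3^k - 1)"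
      proof -
        have pw: "(3::real)^Suc(k+N) = 3^(N+1)*3^k" by (simp add: power_add mult_ac)
        have gen: "2 * (a/2) / (b/2) = (2*a)/(b::real)" for a b by (cases "b=0") (simp_all add: field_simps)
        show ?thesis unfolding pw gen by (simp add: algebra_simps)
      qed
      also have "\<dots> = (2*S + 2*D*(1/3)^k) / (3^(N+1) - (1/3)^k)"
      proof -
        have qq: "(1/3::real)^k = 1 / 3^k" by (simp add: power_one_over)
        have "(3::real) * 1 \<le> 3^(N+1) * 3^k" by (rule mult_mono) (use q c in auto)
        then have pos: "(3::real)^(N+1) * 3^k - 1 > 0" by linarith
        show ?thesis unfolding qq using q pos by (simp add: field_simps)
      qed
      finally show ?thesis .
    qed
    have "(\<lambda>k. (2*S + 2*D*(1/3)^k) / (3^(N+1) - (1/3)^k)) \<longlonglongrightarrow> (2*S + 2*D*0) / (3^(N+1) - 0)"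
      by (intro tendsto_intros LIMSEQ_realpow_zero) auto
    then show "(\<lambda>k. dist_w (Wfin (k+N)) (shifted_sub i (k+N))) \<longlonglongrightarrow> LL" using eq by (simp add: LL_def)
  qed
  have g0: "L0 > 1/6" using S3 by (simp add: L0_def field_simps)
  have g1: "LL > 2/9" using S3 by (simp add: LL_def field_simps)
  show ?thesis using lim0 lim1 g0 g1 by blast
qed

end
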